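(* Let $\mathbf M$ be an $(N+1,k)$-admissible and micro-reversible matrix, written in canonical form with transient states $0,\dots,N-k$ and characteristic triple $(\mu,\widetilde{\mathbf w},\widetilde{\mathbf z})$, and let $\phi:\mathbb R^+\to\mathbb R$ be convex. For a probability vector $\mathbf p\in\mathbb R^{N+1}$ with transient part $\widetilde{\mathbf p}=(p_i)_{i=0,\dots,N-k}$ define $$G_\phi(\mathbf p|\overline{\boldsymbol\pi}):=\begin{cases}\sum_{i=0}^{N-k}\phi\Big(\frac{\widetilde p_i}{\widetilde z_i\langle\widetilde{\mathbf w},\widetilde{\mathbf p}\rangle}\Big)\widetilde w_i\widetilde z_i&\text{if }\langle\widetilde{\mathbf w},\widetilde{\mathbf p}\rangle\neq0,\\ +\infty&\text{otherwise.}\end{cases}$$ Then there is $h_0>0$ depending only on $\mathbf M$ such that for every $h\in(0,h_0)$ and every probability vector $\mathbf p$, with $\mathbf M^{(h)}:=\mathbf I+h(\mathbf M-\mathbf I)$, $$G_\phi(\mathbf M^{(h)}\mathbf p|\overline{\boldsymbol\pi})\le G_\phi(\mathbf p|\overline{\boldsymbol\pi}).$$ Furthermore, if $\phi(x)\ge x-1$ for all $x\ge0$, then $G_\phi(\mathbf p|\overline{\boldsymbol\pi})\ge0$ for every probability vector $\mathbf p$.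
   Context: Column-stochastic matrices. For $1\le k<N-1$, an $(N+1)\times(N+1)$ column-stochastic $\mathbf M$ is $(N+1,k)$-admissible if, after a simultaneous permutation of rows and columns, $\mathbf M=\begin{pmatrix}\widetilde{\mathbf M}&\mathbf 0\\ \mathbf A&\mathbf I\end{pmatrix}$ with $\mathbf I$ the $k\times k$ identity, $\widetilde{\mathbf M}$ irreducible of size $N+1-k$ (the core, indexed by the transient states $0,\dots,N-k$; the last $k$ states are absorbing) and $\mathbf A$ with no zero row. The characteristic triple is $\mu=\rho(\widetilde{\mathbf M})\in(0,1)$ together with the positive left/right eigenvectors $\widetilde{\mathbf w},\widetilde{\mathbf z}$ of the core for $\mu$, normalised by $\langle\widetilde{\mathbf w},\mathbf 1\rangle=\langle\widetilde{\mathbf w},\widetilde{\mathbf z}\rangle=1$. $\mathbf M$ is micro-reversible if $\widetilde w_i\widetilde M_{ij}\widetilde z_j=\widetilde w_j\widetilde M_{ji}\widetilde z_i$ for all $i,j$. The notation $\overline{\boldsymbol\pi}$ refers to the reference measure $(\widetilde{\mathbf w}\circ\widetilde{\mathbf z},\mathbf 0)$ extended by zeros on the absorbing states. *)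

theory Defs
  imports "HOL-Analysis.Analysis"
begin

text \<open>Matrices of size (N+1)x(N+1) are functions nat => nat => real, indexed by 0..N.
  Vectors are nat => real, indexed by 0..N. Transient states are 0..N-k, absorbing N-k+1..N.\<close>

definition column_stochastic :: "nat \<Rightarrow> (nat \<Rightarrow> nat \<Rightarrow> real) \<Rightarrow> bool" where
  "column_stochastic N M \<longleftrightarrow>
     (\<forall>i\<le>N. \<forall>j\<le>N. 0 \<le> M i j) \<and> (\<forall>j\<le>N. (\<Sum>i\<le>N. M i j) = 1)"

definition irreducible_mat :: "nat \<Rightarrow> (nat \<Rightarrow> nat \<Rightarrow> real) \<Rightarrow> bool" where
  "irreducible_mat n A \<longleftrightarrow>
     (\<forall>i<n. \<forall>j<n. (i, j) \<in> {(a, b). a < n \<and> b < n \<and> A a b \<noteq> 0}\<^sup>+)"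

text \<open>(N+1,k)-admissible matrix, already written in canonical form
  M = [[Mt, 0], [A, I]] with core Mt on the transient states 0..N-k.\<close>
definition admissible_canonical :: "nat \<Rightarrow> nat \<Rightarrow> (nat \<Rightarrow> nat \<Rightarrow> real) \<Rightarrow> bool" where
  "admissible_canonical N k M \<longleftrightarrow>
     1 \<le> k \<and> k < N - 1 \<and>
     column_stochastic N M \<and>
     (\<forall>i\<le>N - k. \<forall>j. N - k < j \<and> j \<le> N \<longrightarrow> M i j = 0) \<and>
     (\<forall>i j. N - k < i \<and> i \<le> N \<and> N - k < j \<and> j \<le> N \<longrightarrow> M i j = (if i = j then 1 else 0)) \<and>
     (\<forall>i. N - k < i \<and> i \<le> N \<longrightarrow> (\<exists>j\<le>N - k. M i j \<noteq> 0)) \<and>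
     irreducible_mat (N + 1 - k) M"

definition spectral_radius_fun :: "nat \<Rightarrow> (nat \<Rightarrow> nat \<Rightarrow> real) \<Rightarrow> real" where
  "spectral_radius_fun n A = Max {norm c | c. \<exists>v :: nat \<Rightarrow> complex. (\<exists>i<n. v i \<noteq> 0) \<and>
       (\<forall>i<n. (\<Sum>j<n. complex_of_real (A i j) * v j) = c * v i)}"

definition characteristic_triple ::
  "nat \<Rightarrow> nat \<Rightarrow> (nat \<Rightarrow> nat \<Rightarrow> real) \<Rightarrow> real \<Rightarrow> (nat \<Rightarrow> real) \<Rightarrow> (nat \<Rightarrow> real) \<Rightarrow> bool" where
  "characteristic_triple N k M \<mu> w z \<longleftrightarrow>
     \<mu> = spectral_radius_fun (N + 1 - k) M \<and> 0 < \<mu> \<and> \<mu> < 1 \<and>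
     (\<forall>i\<le>N - k. 0 < w i \<and> 0 < z i) \<and>
     (\<forall>j\<le>N - k. (\<Sum>i\<le>N - k. w i * M i j) = \<mu> * w j) \<and>
     (\<forall>i\<le>N - k. (\<Sum>j\<le>N - k. M i j * z j) = \<mu> * z i) \<and>
     (\<Sum>i\<le>N - k. w i) = 1 \<and> (\<Sum>i\<le>N - k. w i * z i) = 1"

definition micro_reversible ::
  "nat \<Rightarrow> nat \<Rightarrow> (nat \<Rightarrow> nat \<Rightarrow> real) \<Rightarrow> (nat \<Rightarrow> real) \<Rightarrow> (nat \<Rightarrow> real) \<Rightarrow> bool" where
  "micro_reversible N k M w z \<longleftrightarrow>
     (\<forall>i\<le>N - k. \<forall>j\<le>N - k. w i * M i j * z j = w j * M j i * z i)"

definition prob_vector :: "nat \<Rightarrow> (nat \<Rightarrow> real) \<Rightarrow> bool" where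
  "prob_vector N p \<longleftrightarrow> (\<forall>i\<le>N. 0 \<le> p i) \<and> (\<Sum>i\<le>N. p i) = 1"

definition Mh_apply :: "nat \<Rightarrow> (nat \<Rightarrow> nat \<Rightarrow> real) \<Rightarrow> real \<Rightarrow> (nat \<Rightarrow> real) \<Rightarrow> nat \<Rightarrow> real" where
  "Mh_apply N M h p = (\<lambda>i. p i + h * ((\<Sum>j\<le>N. M i j * p j) - p i))"

definition G_phi ::
  "nat \<Rightarrow> nat \<Rightarrow> (nat \<Rightarrow> real) \<Rightarrow> (nat \<Rightarrow> real) \<Rightarrow> (real \<Rightarrow> real) \<Rightarrow> (nat \<Rightarrow> real) \<Rightarrow> ereal" where
  "G_phi N k w z \<phi> p =
     (let s = (\<Sum>i\<le>N - k. w i * p i) in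
      if s \<noteq> 0 then ereal (\<Sum>i\<le>N - k. \<phi> (p i / (z i * s)) * w i * z i) else \<infinity>)"

end

theory Submission
  imports Defs
begin

lemma jensen_step:
  fixes n :: nat and M :: "nat \<Rightarrow> nat \<Rightarrow> real" and w z p :: "nat \<Rightarrow> real"
  assumes cvx: "convex_on {0..} \<phi>"
    and h: "0 < h" "h \<le> 1" and mu: "0 < \<mu>"
    and wz: "\<And>i. i \<le> n \<Longrightarrow> 0 < w i \<and> 0 < z i"
    and Mnn: "\<And>i j. i \<le> n \<Longrightarrow> j \<le> n \<Longrightarrow> 0 \<le> M i j"
    and left: "\<And>j. j \<le> n \<Longrightarrow> (\<Sum>i\<le>n. w i * M i j) = \<mu> * w j"
    and right: "\<And>i. i \<le> n \<Longrightarrow> (\<Sum>j\<le>n. M i j * z j) = \<mu> * z i"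
    and pnn: "\<And>i. i \<le> n \<Longrightarrow> 0 \<le> p i"
    and s: "0 < s"
    and q: "\<And>i. i \<le> n \<Longrightarrow> q i = (1 - h) * p i + h * (\<Sum>j\<le>n. M i j * p j)"
    and c: "c = 1 - h + h * \<mu>"
  shows "(\<Sum>i\<le>n. \<phi> (q i / (z i * (c * s))) * w i * z i) \<le> (\<Sum>i\<le>n. \<phi> (p i / (z i * s)) * w i * z i)"
proof -
  have cpos: "0 < c" using c h mu by (smt (verit) mult_pos_pos)
  have znz: "z j \<noteq> 0" if "j \<le> n" for j using wz[OF that] by simp
  define x where "x j = p j / (z j * s)" for j
  define lam where "lam i j = ((if i = j then 1 - h else 0) + h * M i j * z j / z i) / c" for i j
  have lam_nn: "0 \<le> lam i j" if "i \<le> n" "j \<le> n" for i j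
    unfolding lam_def using wz[OF that(1)] wz[OF that(2)] Mnn[OF that] h cpos
    by (intro divide_nonneg_pos add_nonneg_nonneg) auto
  have x_nn: "x j \<in> {0..}" if "j \<le> n" for j
    unfolding x_def using wz[OF that] pnn[OF that] s by auto
  have lam_sum: "(\<Sum>j\<le>n. lam i j) = 1" if i: "i \<le> n" for i
  proof -
    have "(\<Sum>j\<le>n. lam i j) = (\<Sum>j\<le>n. (if i = j then (1 - h) / c else 0) + (h / (c * z i)) * (M i j * z j))"
      unfolding lam_def using cpos wz[OF i] by (intro sum.cong) (auto simp: field_simps znz)
    also have "\<dots> = (1 - h) / c + (h / (c * z i)) * (\<mu> * z i)"
      using i by (simp only: sum.distrib flip: sum_distrib_left) (simp add: right)
    also have "\<dots> = (1 - h + h * \<mu>) / c" using wz[OF i] cpos by (simp add: field_simps)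
    also have "\<dots> = 1" using cpos c by simp
    finally show ?thesis .
  qed
  have y_eq: "q i / (z i * (c * s)) = (\<Sum>j\<le>n. lam i j * x j)" if i: "i \<le> n" for i
  proof -
    have "(\<Sum>j\<le>n. lam i j * x j) = (\<Sum>j\<le>n. (if i = j then (1 - h) / c * x j else 0) + (h / (c * z i * s)) * (M i j * p j))"
      unfolding lam_def x_def using wz s cpos
      by (intro sum.cong) (auto simp: field_simps znz)
    also have "\<dots> = (1 - h) / c * x i + (h / (c * z i * s)) * (\<Sum>j\<le>n. M i j * p j)"
      using i by (simp only: sum.distrib flip: sum_distrib_left) simp
    also have "\<dots> = q i / (z i * (c * s))"
      unfolding x_def q[OF i] using wz[OF i] cpos s by (simp add: field_simps)
    finally show ?thesis by simp
  qed
  have col: "(\<Sum>i\<le>n. lam i j * (w i * z i)) = w j * z j" if j: "j \<le> n" for j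
  proof -
    have "(\<Sum>i\<le>n. lam i j * (w i * z i)) = (\<Sum>i\<le>n. (if i = j then (1 - h) / c * (w j * z j) else 0) + (h * z j / c) * (w i * M i j))"
      unfolding lam_def using wz cpos
      by (intro sum.cong) (auto simp: field_simps znz)
    also have "\<dots> = (1 - h) / c * (w j * z j) + (h * z j / c) * (\<mu> * w j)"
      using j by (simp only: sum.distrib flip: sum_distrib_left) (simp add: left)
    also have "\<dots> = (1 - h + h * \<mu>) / c * (w j * z j)" using cpos by (simp add: field_simps)
    also have "\<dots> = w j * z j" using cpos c by simp
    finally show ?thesis .
  qed
  have "(\<Sum>i\<le>n. \<phi> (q i / (z i * (c * s))) * w i * z i) \<le> (\<Sum>i\<le>n. (\<Sum>j\<le>n. lam i j * \<phi> (x j)) * (w i * z i))"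
  proof (rule sum_mono)
    fix i assume "i \<in> {..n}"
    then have i: "i \<le> n" by simp
    have "\<phi> (\<Sum>j\<le>n. lam i j * x j) \<le> (\<Sum>j\<le>n. lam i j * \<phi> (x j))"
      using convex_on_sum[OF _ _ cvx, of "{..n}" "lam i" x] lam_sum[OF i] lam_nn[OF i] x_nn by (simp del: atLeast_iff)
    then show "\<phi> (q i / (z i * (c * s))) * w i * z i \<le> (\<Sum>j\<le>n. lam i j * \<phi> (x j)) * (w i * z i)"
      using y_eq[OF i] wz[OF i] by (simp add: mult.assoc mult_right_mono)
  qed
  also have "\<dots> = (\<Sum>j\<le>n. \<phi> (x j) * (\<Sum>i\<le>n. lam i j * (w i * z i)))"
    unfolding sum_distrib_right sum_distrib_left
    by (subst sum.swap) (simp add: mult_ac)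
  also have "\<dots> = (\<Sum>j\<le>n. \<phi> (p j / (z j * s)) * w j * z j)"
    by (rule sum.cong) (simp_all add: col x_def)
  finally show ?thesis .
qed

lemma wq_sum:
  fixes n :: nat and M :: "nat \<Rightarrow> nat \<Rightarrow> real" and w p q :: "nat \<Rightarrow> real"
  assumes left: "\<And>j. j \<le> n \<Longrightarrow> (\<Sum>i\<le>n. w i * M i j) = \<mu> * w j"
    and q: "\<And>i. i \<le> n \<Longrightarrow> q i = (1 - h) * p i + h * (\<Sum>j\<le>n. M i j * p j)"
  shows "(\<Sum>i\<le>n. w i * q i) = (1 - h + h * \<mu>) * (\<Sum>i\<le>n. w i * p i)"
proof -
  have "(\<Sum>i\<le>n. w i * q i) = (\<Sum>i\<le>n. (1 - h) * (w i * p i) + h * (\<Sum>j\<le>n. w i * M i j * p j))"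
    by (rule sum.cong) (simp_all add: q algebra_simps sum_distrib_left)
  also have "\<dots> = (1 - h) * (\<Sum>i\<le>n. w i * p i) + h * (\<Sum>i\<le>n. \<Sum>j\<le>n. w i * M i j * p j)"
    by (simp add: sum.distrib sum_distrib_left)
  also have "(\<Sum>i\<le>n. \<Sum>j\<le>n. w i * M i j * p j) = (\<Sum>j\<le>n. (\<Sum>i\<le>n. w i * M i j) * p j)"
    by (subst sum.swap) (simp add: sum_distrib_right)
  also have "\<dots> = (\<Sum>j\<le>n. \<mu> * (w j * p j))"
    by (rule sum.cong) (simp_all add: left)
  finally show ?thesis by (simp add: sum_distrib_left[symmetric] algebra_simps)
qed

theorem proposition1:
  fixes N k :: nat and M :: "nat \<Rightarrow> nat \<Rightarrow> real" and \<mu> :: real and w z :: "nat \<Rightarrow> real"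
  assumes "admissible_canonical N k M"
    and "characteristic_triple N k M \<mu> w z"
    and "micro_reversible N k M w z"
  shows "(\<exists>h0>0. \<forall>\<phi> :: real \<Rightarrow> real. convex_on {0..} \<phi> \<longrightarrow>
            (\<forall>h p. 0 < h \<and> h < h0 \<and> prob_vector N p \<longrightarrow>
               G_phi N k w z \<phi> (Mh_apply N M h p) \<le> G_phi N k w z \<phi> p))
       \<and> (\<forall>\<phi> :: real \<Rightarrow> real. convex_on {0..} \<phi> \<and> (\<forall>x\<ge>0. \<phi> x \<ge> x - 1) \<longrightarrow>
            (\<forall>p. prob_vector N p \<longrightarrow> 0 \<le> G_phi N k w z \<phi> p))"
proof -
  define n where "n = N - k"
  have nN: "n \<le> N" unfolding n_def by simp
  have Mnn: "\<And>i j. i \<le> N \<Longrightarrow> j \<le> N \<Longrightarrow> 0 \<le> M i j"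
    using assms(1) unfolding admissible_canonical_def column_stochastic_def by blast
  have Mz: "\<And>i j. i \<le> n \<Longrightarrow> n < j \<Longrightarrow> j \<le> N \<Longrightarrow> M i j = 0"
    using assms(1) unfolding admissible_canonical_def n_def by blast
  have mu: "0 < \<mu>" and wz: "\<And>i. i \<le> n \<Longrightarrow> 0 < w i \<and> 0 < z i"
    and left: "\<And>j. j \<le> n \<Longrightarrow> (\<Sum>i\<le>n. w i * M i j) = \<mu> * w j"
    and right: "\<And>i. i \<le> n \<Longrightarrow> (\<Sum>j\<le>n. M i j * z j) = \<mu> * z i"
    and wsum: "(\<Sum>i\<le>n. w i * z i) = 1"
    using assms(2) unfolding characteristic_triple_def n_def by blast+
  have Gdef: "G_phi N k w z \<phi> p = (if (\<Sum>i\<le>n. w i * p i) \<noteq> 0 then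
      ereal (\<Sum>i\<le>n. \<phi> (p i / (z i * (\<Sum>i\<le>n. w i * p i))) * w i * z i) else \<infinity>)" for \<phi> p
    unfolding G_phi_def Let_def n_def ..
  have spos: "0 \<le> (\<Sum>i\<le>n. w i * p i)" if "prob_vector N p" for p
    using that wz nN unfolding prob_vector_def by (intro sum_nonneg) (simp add: less_imp_le)
  have part1: "G_phi N k w z \<phi> (Mh_apply N M h p) \<le> G_phi N k w z \<phi> p"
    if cvx: "convex_on {0..} \<phi>" and h: "0 < h" "h < 1" and pv: "prob_vector N p" for \<phi> h p
  proof (cases "(\<Sum>i\<le>n. w i * p i) = 0")
    case True
    then show ?thesis by (simp add: Gdef[of \<phi> p])
  next
    case False
    define s where "s = (\<Sum>i\<le>n. w i * p i)"
    have s: "0 < s" using False spos[OF pv] unfolding s_def by linarith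
    define q where "q = Mh_apply N M h p"
    define c where "c = 1 - h + h * \<mu>"
    have cpos: "0 < c" using h mu unfolding c_def by (smt (verit) mult_pos_pos)
    have pnn: "\<And>i. i \<le> n \<Longrightarrow> 0 \<le> p i" using pv nN unfolding prob_vector_def by auto
    have qi: "q i = (1 - h) * p i + h * (\<Sum>j\<le>n. M i j * p j)" if i: "i \<le> n" for i
    proof -
      have "(\<Sum>j\<le>N. M i j * p j) = (\<Sum>j\<le>n. M i j * p j)"
        by (rule sum.mono_neutral_right) (use nN Mz[OF i] in auto)
      then show ?thesis unfolding q_def Mh_apply_def by (simp add: algebra_simps)
    qed
    have wq: "(\<Sum>i\<le>n. w i * q i) = c * s"
      unfolding c_def s_def by (rule wq_sum[OF left qi])
    have "(\<Sum>i\<le>n. \<phi> (q i / (z i * (c * s))) * w i * z i) \<le> (\<Sum>i\<le>n. \<phi> (p i / (z i * s)) * w i * z i)"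
      by (rule jensen_step[OF cvx h(1) _ mu wz Mnn left right pnn s qi c_def]) (use h nN in auto)
    moreover have "G_phi N k w z \<phi> q = ereal (\<Sum>i\<le>n. \<phi> (q i / (z i * (c * s))) * w i * z i)"
      unfolding Gdef[of \<phi> q] wq using cpos s by simp
    moreover have "G_phi N k w z \<phi> p = ereal (\<Sum>i\<le>n. \<phi> (p i / (z i * s)) * w i * z i)"
      unfolding Gdef[of \<phi> p] s_def[symmetric] using s by simp
    ultimately show ?thesis unfolding q_def by simp
  qed
  have part2: "0 \<le> G_phi N k w z \<phi> p"
    if phi: "\<forall>x\<ge>0. \<phi> x \<ge> x - 1" and pv: "prob_vector N p" for \<phi> p
  proof (cases "(\<Sum>i\<le>n. w i * p i) = 0")
    case True
    then show ?thesis by (simp add: Gdef[of \<phi> p])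
  next
    case False
    define s where "s = (\<Sum>i\<le>n. w i * p i)"
    have s: "0 < s" using False spos[OF pv] unfolding s_def by linarith
    have pnn: "\<And>i. i \<le> n \<Longrightarrow> 0 \<le> p i" using pv nN unfolding prob_vector_def by auto
    have "(\<Sum>i\<le>n. (p i / (z i * s) - 1) * w i * z i) \<le> (\<Sum>i\<le>n. \<phi> (p i / (z i * s)) * w i * z i)"
    proof (rule sum_mono)
      fix i assume "i \<in> {..n}"
      then have i: "i \<le> n" by simp
      have "p i / (z i * s) - 1 \<le> \<phi> (p i / (z i * s))"
        using phi pnn[OF i] wz[OF i] s by simp
      then show "(p i / (z i * s) - 1) * w i * z i \<le> \<phi> (p i / (z i * s)) * w i * z i"
        using wz[OF i] by (intro mult_right_mono) simp_all
    qed
    moreover have "(\<Sum>i\<le>n. (p i / (z i * s) - 1) * w i * z i) = (\<Sum>i\<le>n. w i * p i) / s - (\<Sum>i\<le>n. w i * z i)"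
    proof -
      have znz: "z j \<noteq> 0" if "j \<le> n" for j using wz[OF that] by simp
      have "(\<Sum>i\<le>n. (p i / (z i * s) - 1) * w i * z i) = (\<Sum>i\<le>n. w i * p i / s - w i * z i)"
        by (rule sum.cong) (use s in \<open>simp_all add: znz field_simps\<close>)
      then show ?thesis by (simp add: sum_subtractf sum_divide_distrib)
    qed
    moreover have "(\<Sum>i\<le>n. w i * p i) / s = 1" using s unfolding s_def by simp
    ultimately have "0 \<le> (\<Sum>i\<le>n. \<phi> (p i / (z i * s)) * w i * z i)" using wsum by simp
    then show ?thesis unfolding Gdef[of \<phi> p] s_def[symmetric] using s by simp
  qed
  show ?thesis
    by (intro conjI exI[of _ 1]) (auto intro: part1 part2)
qed

end
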